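(* Let $g\in\mathcal{G}$ be an $\mathbb{S}$-nearly periodic function that is bounded above by a sub-polynomial function. Then there exist $\alpha>0$ and an increasing sequence $(y_k)$ of positive integers such that $g(y_k)\le y_k^{-\alpha}$ for all $k$ and, for every $x\in\mathbb{N}$, $\lim_{k\to\infty} g(x+y_k)=g(x)$.
   Context: $\mathcal{G}=\{g:\mathbb{Z}_{\ge0}\to\mathbb{R}: g(0)=0,\ g(1)=1,\ g(x)>0\ \forall x>0\}$. A function $f:\mathbb{R}_{\ge0}\to\mathbb{R}_{\ge0}$ is sub-polynomial if for every $\alpha>0$, $\lim_{x\to\infty}x^\alpha f(x)=\infty$ and $\lim_{x\to\infty}x^{-\alpha}f(x)=0$. For a set $\mathcal{S}$ of functions, $g$ is $\mathcal{S}$-nearly periodic if (1) there is $\alpha>0$ such that for every $N>0$ there exist $x,y\in\mathbb{N}$, $x<y$, $y\ge N$ with $g(y)\le g(x)/y^\alpha$ (such $y$ is called an $\alpha$-period of $g$); and (2) for every $\alpha>0$ and every $h\in\mathcal{S}$ there is $N_1>0$ such that for all $\alpha$-periods $y\ge N_1$ and all $x<y$ with $g(y)y^\alpha\le g(x)$, $|g(x+y)-g(x)|\le \min\{g(x),g(x+y)\}h(y)$. $\mathbb{S}$ denotes the set of non-increasing sub-polynomial functions on $\mathbb{Z}_{\ge0}$. *)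

theory Defs
  imports "HOL-Analysis.Analysis"
begin

definition in_G :: "(nat \<Rightarrow> real) \<Rightarrow> bool" where
  "in_G g \<longleftrightarrow> g 0 = 0 \<and> g 1 = 1 \<and> (\<forall>x>0. g x > 0)"

definition sub_polynomial :: "(real \<Rightarrow> real) \<Rightarrow> bool" where
  "sub_polynomial f \<longleftrightarrow> (\<forall>x\<ge>0. f x \<ge> 0) \<and>
     (\<forall>\<alpha>>0. filterlim (\<lambda>x. x powr \<alpha> * f x) at_top at_top \<and>
             ((\<lambda>x. x powr (-\<alpha>) * f x) \<longlongrightarrow> 0) at_top)"

definition sub_polynomial_nat :: "(nat \<Rightarrow> real) \<Rightarrow> bool" where
  "sub_polynomial_nat f \<longleftrightarrow> (\<forall>x. f x \<ge> 0) \<and>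
     (\<forall>\<alpha>>0. filterlim (\<lambda>x. real x powr \<alpha> * f x) at_top sequentially \<and>
             (\<lambda>x. real x powr (-\<alpha>) * f x) \<longlonglongrightarrow> 0)"

definition SS :: "(nat \<Rightarrow> real) set" where
  "SS = {h. antimono h \<and> sub_polynomial_nat h}"

definition alpha_period :: "(nat \<Rightarrow> real) \<Rightarrow> real \<Rightarrow> nat \<Rightarrow> bool" where
  "alpha_period g \<alpha> y \<longleftrightarrow> (\<exists>x<y. g y \<le> g x / real y powr \<alpha>)"

definition nearly_periodic :: "(nat \<Rightarrow> real) set \<Rightarrow> (nat \<Rightarrow> real) \<Rightarrow> bool" where
  "nearly_periodic S g \<longleftrightarrow>
     (\<exists>\<alpha>>0. \<forall>N>0. \<exists>x y. x < y \<and> y \<ge> N \<and> g y \<le> g x / real y powr \<alpha>) \<and>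
     (\<forall>\<alpha>>0. \<forall>h\<in>S. \<exists>N1>0. \<forall>y x. alpha_period g \<alpha> y \<and> y \<ge> N1 \<and> x < y \<and>
         g y * real y powr \<alpha> \<le> g x \<longrightarrow>
         \<bar>g (x + y) - g x\<bar> \<le> min (g x) (g (x + y)) * h y)"

end

theory Submission
  imports Defs "HOL-Real_Asymp.Real_Asymp"
begin

lemma hSS: "(\<lambda>n::nat. 1 / ln (real n + 2)) \<in> SS"
proof -
  have "antimono (\<lambda>n::nat. 1 / ln (real n + 2))"
    by (intro antimonoI divide_left_mono) (auto intro!: mult_pos_pos)
  moreover have "filterlim (\<lambda>x. real x powr a * (1 / ln (real x + 2))) at_top sequentially
     \<and> (\<lambda>x. real x powr (-a) * (1 / ln (real x + 2))) \<longlonglongrightarrow> 0" if "a > 0" for a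
    using that by (intro conjI; real_asymp)
  ultimately show ?thesis unfolding SS_def sub_polynomial_nat_def by auto
qed

theorem proposition29:
  fixes g :: "nat \<Rightarrow> real" and f :: "real \<Rightarrow> real"
  assumes "in_G g"
    and "nearly_periodic SS g"
    and "sub_polynomial f"
    and "\<forall>x. g x \<le> f (real x)"
  shows "\<exists>\<alpha>>0. \<exists>y :: nat \<Rightarrow> nat. strict_mono y \<and> (\<forall>k. y k > 0) \<and>
           (\<forall>k. g (y k) \<le> real (y k) powr (-\<alpha>)) \<and>
           (\<forall>x. (\<lambda>k. g (x + y k)) \<longlonglongrightarrow> g x)"
proof -
  have g0: "g 0 = 0" and gpos: "\<And>x. x > 0 \<Longrightarrow> g x > 0" using assms(1) unfolding in_G_def by auto
  have gnn: "g x \<ge> 0" for x using g0 gpos by (cases "x = 0") (auto intro: less_imp_le)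
  obtain a0 where a0: "a0 > 0" and P: "\<And>N. N > 0 \<Longrightarrow> \<exists>x y. x < y \<and> y \<ge> N \<and> g y \<le> g x / real y powr a0"
    using assms(2) unfolding nearly_periodic_def by blast
  have Q: "\<forall>\<alpha>>0. \<forall>h\<in>SS. \<exists>N1>0. \<forall>y x. alpha_period g \<alpha> y \<and> y \<ge> N1 \<and> x < y \<and>
         g y * real y powr \<alpha> \<le> g x \<longrightarrow>
         \<bar>g (x + y) - g x\<bar> \<le> min (g x) (g (x + y)) * h y"
    using assms(2) unfolding nearly_periodic_def by blast
  define a where "a = a0 / 4"
  have apos: "a > 0" using a0 by (simp add: a_def)
  have "((\<lambda>x. x powr (-(2*a)) * f x) \<longlongrightarrow> 0) at_top"
    using assms(3) apos unfolding sub_polynomial_def by auto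
  then have "eventually (\<lambda>x. x powr (-(2*a)) * f x < 1) at_top"
    by (rule order_tendstoD) simp
  then obtain M where M: "\<And>x. x \<ge> M \<Longrightarrow> x powr (-(2*a)) * f x < 1"
    by (auto simp: eventually_at_top_linorder)
  define C where "C = Max (g ` {..nat \<lceil>M\<rceil>})"
  have gb: "g n \<le> max C (real n powr (2*a))" for n
  proof (cases "n \<le> nat \<lceil>M\<rceil>")
    case True
    then have "g n \<le> C" unfolding C_def by (intro Max_ge) auto
    then show ?thesis by simp
  next
    case False
    then have nM: "real n \<ge> M" by linarith
    have npos: "real n > 0" using False by simp
    have "real n powr (-(2*a)) * f (real n) < 1" using M[OF nM] .
    then have "f (real n) < real n powr (2*a)"
      using npos by (simp add: powr_minus field_simps)
    then show ?thesis using assms(4) by (smt (verit))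
  qed
  have "filterlim (\<lambda>n::nat. real n powr (3*a)) at_top sequentially"
    using apos by real_asymp
  then have "eventually (\<lambda>n::nat. real n powr (3*a) \<ge> C) sequentially"
    by (simp add: filterlim_at_top)
  then obtain N0' where N0': "\<And>n. n \<ge> N0' \<Longrightarrow> real n powr (3*a) \<ge> C"
    by (auto simp: eventually_sequentially)
  define N0 where "N0 = max N0' 1"
  have good: "g y \<le> real y powr (-a)" if "x < y" "y \<ge> N0" "g y \<le> g x / real y powr a0" for x y
  proof -
    have y1: "real y \<ge> 1" using that(2) by (simp add: N0_def)
    have "g x \<le> max C (real x powr (2*a))" by (rule gb)
    also have "\<dots> \<le> max C (real y powr (2*a))"
      using that(1) apos by (intro max.mono powr_mono2) auto
    also have "\<dots> \<le> real y powr (3*a)"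
      using N0'[of y] that(2) y1 apos by (auto simp: N0_def intro!: powr_mono)
    finally have gx: "g x \<le> real y powr (3*a)" .
    have "g y \<le> g x / real y powr a0" by fact
    also have "\<dots> \<le> real y powr (3*a) / real y powr a0"
      using gx y1 by (intro divide_right_mono) auto
    also have "\<dots> = real y powr (-a)"
      using y1 by (simp add: a_def powr_diff[symmetric])
    finally show ?thesis .
  qed
  have "\<exists>Y. \<forall>N>0. \<exists>x. x < Y N \<and> Y N \<ge> N \<and> g (Y N) \<le> g x / real (Y N) powr a0"
    using P by metis
  then obtain Y where Y: "\<And>N. N > 0 \<Longrightarrow> \<exists>x. x < Y N \<and> Y N \<ge> N \<and> g (Y N) \<le> g x / real (Y N) powr a0"
    by blast
  define y where "y = rec_nat (Y N0) (\<lambda>_ m. Y (max (m + 1) N0))"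
  have y0: "y 0 = Y N0" and ySuc: "y (Suc k) = Y (max (y k + 1) N0)" for k
    by (simp_all add: y_def)
  have N0pos: "N0 > 0" by (simp add: N0_def)
  have yprop: "\<exists>x. x < y k \<and> y k \<ge> N0 \<and> g (y k) \<le> g x / real (y k) powr a0" for k
  proof (cases k)
    case 0 then show ?thesis using Y[OF N0pos] y0 by simp
  next
    case (Suc j)
    have "max (y j + 1) N0 > 0" by simp
    from Y[OF this] show ?thesis using Suc ySuc by force
  qed
  have ymono: "strict_mono y"
  proof (rule strict_monoI_Suc)
    fix k
    have "max (y k + 1) N0 > 0" by simp
    from Y[OF this] show "y k < y (Suc k)" using ySuc by force
  qed
  have yN0: "y k \<ge> N0" for k using yprop by blast
  have ypos: "y k > 0" for k using yN0[of k] N0pos by simp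
  have ygood: "g (y k) \<le> real (y k) powr (-a)" for k
    using yprop[of k] good by blast
  have ylim: "filterlim y at_top sequentially" using ymono by (rule filterlim_subseq)
  have ylimr: "filterlim (\<lambda>k. real (y k)) at_top sequentially"
    using filterlim_compose[OF filterlim_real_sequentially ylim] by simp
  define h where "h = (\<lambda>n::nat. 1 / ln (real n + 2))"
  have hS: "h \<in> SS" unfolding h_def by (rule hSS)
  have hnn: "h n \<ge> 0" for n unfolding h_def by simp
  have hlim: "h \<longlonglongrightarrow> 0" unfolding h_def by real_asymp
  have a2: "a / 2 > 0" using apos by simp
  obtain N1 where N1: "N1 > 0" and N1p: "\<And>yy x. alpha_period g (a/2) yy \<Longrightarrow> yy \<ge> N1 \<Longrightarrow> x < yy \<Longrightarrow>
         g yy * real yy powr (a/2) \<le> g x \<Longrightarrow>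
         \<bar>g (x + yy) - g x\<bar> \<le> min (g x) (g (x + yy)) * h yy"
  proof -
    have "\<exists>N1>0. \<forall>yy x. alpha_period g (a/2) yy \<and> yy \<ge> N1 \<and> x < yy \<and>
         g yy * real yy powr (a/2) \<le> g x \<longrightarrow>
         \<bar>g (x + yy) - g x\<bar> \<le> min (g x) (g (x + yy)) * h yy"
      using Q a2 hS by simp
    then show ?thesis using that by blast
  qed
  have per: "alpha_period g (a/2) (y k)" for k
  proof -
    obtain x where x: "x < y k" "g (y k) \<le> g x / real (y k) powr a0" using yprop by blast
    have y1: "real (y k) \<ge> 1" using ypos[of k] by simp
    have "real (y k) powr (a/2) \<le> real (y k) powr a0"
      using y1 a0 by (intro powr_mono) (auto simp: a_def)
    then have "g x / real (y k) powr a0 \<le> g x / real (y k) powr (a/2)"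
      using gnn[of x] y1 by (intro divide_left_mono) auto
    then show ?thesis using x unfolding alpha_period_def by force
  qed
  have conv: "(\<lambda>k. g (x + y k)) \<longlonglongrightarrow> g x" for x
  proof (cases "x = 0")
    case True
    have "(\<lambda>k. real (y k) powr (-a)) \<longlonglongrightarrow> 0"
      by (rule filterlim_compose[OF _ ylimr]) (use apos in real_asymp)
    note L = this
    have E1: "eventually (\<lambda>k. (0::real) \<le> g (y k)) sequentially" using gnn by (intro always_eventually) blast
    have E2: "eventually (\<lambda>k. g (y k) \<le> real (y k) powr (-a)) sequentially" using ygood by (intro always_eventually) blast
    have "(\<lambda>k. g (y k)) \<longlonglongrightarrow> 0"
      using tendsto_sandwich[OF E1 E2 tendsto_const L] .
    then show ?thesis using True g0 by simp
  next
    case False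
    then have gx: "g x > 0" using gpos by simp
    have "(\<lambda>k. real (y k) powr (-(a/2))) \<longlonglongrightarrow> 0"
      by (rule filterlim_compose[OF _ ylimr]) (use apos in real_asymp)
    then have ev1: "eventually (\<lambda>k. real (y k) powr (-(a/2)) < g x) sequentially"
      using gx by (rule order_tendstoD)
    have ev2: "eventually (\<lambda>k. y k \<ge> max N1 (x+1)) sequentially"
      using ylim unfolding filterlim_at_top by (simp del: max_def max.bounded_iff)
    have ev: "eventually (\<lambda>k. norm (g (x + y k) - g x) \<le> g x * h (y k)) sequentially"
      using ev1 ev2
    proof eventually_elim
      case (elim k)
      have y1: "real (y k) \<ge> 1" using ypos[of k] by simp
      have "g (y k) * real (y k) powr (a/2) \<le> real (y k) powr (-a) * real (y k) powr (a/2)"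
        using ygood[of k] by (intro mult_right_mono) auto
      also have "\<dots> = real (y k) powr (-(a/2))" using y1 by (simp add: powr_add[symmetric])
      also have "\<dots> \<le> g x" using elim(1) by simp
      finally have c: "g (y k) * real (y k) powr (a/2) \<le> g x" .
      have "\<bar>g (x + y k) - g x\<bar> \<le> min (g x) (g (x + y k)) * h (y k)"
        using N1p[OF per[of k] _ _ c] elim(2) by simp
      also have "\<dots> \<le> g x * h (y k)" using hnn[of "y k"] by (intro mult_right_mono) auto
      finally show ?case by simp
    qed
    have "(\<lambda>k. g x * h (y k)) \<longlonglongrightarrow> g x * 0"
      by (intro tendsto_mult tendsto_const filterlim_compose[OF hlim ylim])
    then have L2: "(\<lambda>k. g x * h (y k)) \<longlonglongrightarrow> 0" by simp
    have "(\<lambda>k. g (x + y k) - g x) \<longlonglongrightarrow> 0"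
      using Lim_null_comparison[OF ev L2] .
    then show ?thesis by (simp add: LIM_zero_cancel)
  qed
  show ?thesis using apos ymono ypos ygood conv by blast
qed

end
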